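(* Let $\mathcal{A}$ be a central and essential arrangement in $\mathbb{Q}^l$ as in the context, let $\sigma$ be a term ordering, $p$ a prime, and $1\le i<j\le n$. If $(\alpha_i)_p=\beta(\alpha_j)_p$ for some $\beta\in\mathbb{F}_p\setminus\{0\}$, then $p$ is not $\sigma$-lucky for the ideal $\langle\alpha_i,\alpha_j\rangle\subseteq\mathbb{Z}[x_1,\dots,x_l]$.
   Context: $\mathcal{A}=\{H_1,\dots,H_n\}$: $n$ distinct linear hyperplanes in $\mathbb{Q}^l$ with $\bigcap H_i=\{0\}$, $H_i=\{\alpha_i=0\}$, $\alpha_i\in\mathbb{Z}[x_1,\dots,x_l]$ a nonzero linear form whose coefficients are not all divisible by any prime (so $\alpha_i,\alpha_j$ are not scalar multiples of one another for $i\ne j$). $(\alpha_i)_p$ is the reduction of $\alpha_i$ mod $p$. For a term ordering $\sigma$ and nonzero $f\in\mathbb{Z}[x_1,\dots,x_l]$, $\mathrm{LT}_\sigma(f)$ is the $\sigma$-largest term, $\mathrm{LC}_\sigma(f)$ its coefficient, $\mathrm{LM}_\sigma(f)=\mathrm{LC}_\sigma(f)\mathrm{LT}_\sigma(f)$. A minimal strong $\sigma$-Gröbner basis of an ideal $I\subseteq\mathbb{Z}[x_1,\dots,x_l]$ is a finite generating set $G$ of nonzero elements of $I$ such that every nonzero $f\in I$ has $\mathrm{LM}_\sigma(f)$ divisible by some $\mathrm{LM}_\sigma(g)$, $g\in G$, and no $\mathrm{LM}_\sigma(g)$ divides $\mathrm{LM}_\sigma(g')$ for distinct $g,g'\in G$;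 the set of leading coefficients is independent of the choice. $p$ is $\sigma$-lucky for $I$ if $p$ divides none of these leading coefficients. *)

theory Defs
  imports Complex_Main "HOL-Library.Poly_Mapping" "HOL-Computational_Algebra.Primes"
begin

text \<open>Variable x_k of the paper (1 <= k <= l) is represented by index k-1 < l.\<close>

type_synonym mon = "nat \<Rightarrow>\<^sub>0 nat"
type_synonym zpoly = "mon \<Rightarrow>\<^sub>0 int"

definition mons :: "nat \<Rightarrow> mon set" where
  "mons l = {m. Poly_Mapping.keys m \<subseteq> {..<l}}"

definition zring :: "nat \<Rightarrow> zpoly set" where
  "zring l = {f. Poly_Mapping.keys f \<subseteq> mons l}"

definition poly_ideal :: "nat \<Rightarrow> zpoly set \<Rightarrow> zpoly set" where
  "poly_ideal l S = {(\<Sum>s\<in>F. c s * s) | F c. finite F \<and> F \<subseteq> S \<and> (\<forall>s\<in>F. c s \<in> zring l)}"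

definition term_order :: "nat \<Rightarrow> (mon \<Rightarrow> mon \<Rightarrow> bool) \<Rightarrow> bool" where
  "term_order l le \<longleftrightarrow>
     (\<forall>m\<in>mons l. le m m) \<and>
     (\<forall>m\<in>mons l. \<forall>m'\<in>mons l. le m m' \<and> le m' m \<longrightarrow> m = m') \<and>
     (\<forall>m\<in>mons l. \<forall>m'\<in>mons l. \<forall>m''\<in>mons l. le m m' \<and> le m' m'' \<longrightarrow> le m m'') \<and>
     (\<forall>m\<in>mons l. \<forall>m'\<in>mons l. le m m' \<or> le m' m) \<and>
     (\<forall>m\<in>mons l. le 0 m) \<and>
     (\<forall>m\<in>mons l. \<forall>m'\<in>mons l. \<forall>k\<in>mons l. le m m' \<longrightarrow> le (m + k) (m' + k))"

definition lt :: "(mon \<Rightarrow> mon \<Rightarrow> bool) \<Rightarrow> zpoly \<Rightarrow> mon" where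
  "lt le f = (THE m. m \<in> Poly_Mapping.keys f \<and> (\<forall>m'\<in>Poly_Mapping.keys f. le m' m))"

definition lc :: "(mon \<Rightarrow> mon \<Rightarrow> bool) \<Rightarrow> zpoly \<Rightarrow> int" where
  "lc le f = Poly_Mapping.lookup f (lt le f)"

definition mon_dvd :: "mon \<Rightarrow> mon \<Rightarrow> bool" where
  "mon_dvd m m' \<longleftrightarrow> (\<forall>v. Poly_Mapping.lookup m v \<le> Poly_Mapping.lookup m' v)"

definition lm_dvd :: "(mon \<Rightarrow> mon \<Rightarrow> bool) \<Rightarrow> zpoly \<Rightarrow> zpoly \<Rightarrow> bool" where
  "lm_dvd le g f \<longleftrightarrow> lc le g dvd lc le f \<and> mon_dvd (lt le g) (lt le f)"

definition min_strong_GB :: "nat \<Rightarrow> (mon \<Rightarrow> mon \<Rightarrow> bool) \<Rightarrow> zpoly set \<Rightarrow> zpoly set \<Rightarrow> bool" where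
  "min_strong_GB l le I G \<longleftrightarrow>
     finite G \<and> G \<subseteq> I - {0} \<and> poly_ideal l G = I \<and>
     (\<forall>f\<in>I. f \<noteq> 0 \<longrightarrow> (\<exists>g\<in>G. lm_dvd le g f)) \<and>
     (\<forall>g\<in>G. \<forall>g'\<in>G. g \<noteq> g' \<longrightarrow> \<not> lm_dvd le g g')"

definition lucky :: "nat \<Rightarrow> (mon \<Rightarrow> mon \<Rightarrow> bool) \<Rightarrow> zpoly set \<Rightarrow> int \<Rightarrow> bool" where
  "lucky l le I p \<longleftrightarrow> (\<forall>G. min_strong_GB l le I G \<longrightarrow> (\<forall>g\<in>G. \<not> p dvd lc le g))"

text \<open>The integral linear form with coefficient vector a (a k = coefficient of x_{k+1}).\<close>
definition lin_form :: "nat \<Rightarrow> (nat \<Rightarrow> int) \<Rightarrow> zpoly" where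
  "lin_form l a = (\<Sum>k<l. Poly_Mapping.single (Poly_Mapping.single k 1) (a k))"

definition hyperplane :: "nat \<Rightarrow> (nat \<Rightarrow> int) \<Rightarrow> (nat \<Rightarrow> rat) set" where
  "hyperplane l a = {x. (\<forall>k\<ge>l. x k = 0) \<and> (\<Sum>k<l. of_int (a k) * x k) = 0}"

end

theory Submission
  imports Defs "HOL-Library.Ramsey"
begin


lemma dickson_set:
  fixes f :: "nat \<Rightarrow> nat \<Rightarrow> nat"
  shows "infinite (S::nat set) \<Longrightarrow> \<exists>Y\<subseteq>S. infinite Y \<and> (\<forall>x\<in>Y. \<forall>y\<in>Y. x < y \<longrightarrow> (\<forall>v<k. f x v \<le> f y v))"
proof (induction k arbitrary: S)
  case 0
  then show ?case by blast
next
  case (Suc k)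
  then obtain Y where Y: "Y \<subseteq> S" "infinite Y" "\<forall>x\<in>Y. \<forall>y\<in>Y. x < y \<longrightarrow> (\<forall>v<k. f x v \<le> f y v)"
    by blast
  define g where "g X = (if f (Min X) k \<le> f (Max X) k then 0 else (1::nat))" for X
  have "\<exists>Y' t. Y' \<subseteq> Y \<and> infinite Y' \<and> t < 2 \<and> (\<forall>x\<in>Y'. \<forall>y\<in>Y'. x\<noteq>y \<longrightarrow> g {x, y} = t)"
    by (rule Ramsey2[OF Y(2)]) (auto simp: g_def)
  then obtain Y' t where Y': "Y' \<subseteq> Y" "infinite Y'" "t < 2" "\<forall>x\<in>Y'. \<forall>y\<in>Y'. x\<noteq>y \<longrightarrow> g {x, y} = t"
    by blast
  have gxy: "g {x, y} = (if f x k \<le> f y k then 0 else 1)" if "x < y" for x y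
    using that by (simp add: g_def min_def max_def)
  show ?case
  proof (cases "t = 0")
    case True
    have H: "\<forall>x\<in>Y'. \<forall>y\<in>Y'. x < y \<longrightarrow> (\<forall>v<Suc k. f x v \<le> f y v)"
    proof (intro ballI impI allI)
      fix x y v assume xy: "x \<in> Y'" "y \<in> Y'" "x < y" "v < Suc k"
      show "f x v \<le> f y v"
      proof (cases "v = k")
        case True
        with Y'(4) xy gxy[of x y] \<open>t = 0\<close> show ?thesis by (auto split: if_splits)
      next
        case False
        with Y(3) Y'(1) xy show ?thesis by (metis less_SucE subsetD)
      qed
    qed
    have "Y' \<subseteq> S" using Y(1) Y'(1) by blast
    then show ?thesis using Y'(2) H by blast
  next
    case False
    then have t1: "t = 1" using Y'(3) by simp
    have dec: "f y k < f x k" if "x \<in> Y'" "y \<in> Y'" "x < y" for x y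
      using Y'(4) that gxy[of x y] t1 by (auto split: if_splits)
    obtain z where z: "z \<in> Y'" using infinite_imp_nonempty[OF Y'(2)] by blast
    obtain x0 where x0: "x0 \<in> Y'" "\<forall>y\<in>Y'. f x0 k \<le> f y k"
      using ex_has_least_nat[of "\<lambda>x. x \<in> Y'" z "\<lambda>x. f x k", OF z] by blast
    obtain y where "y \<in> Y'" "x0 < y"
      using Y'(2) unfolding infinite_nat_iff_unbounded by blast
    with dec[of x0 y] x0 have False by fastforce
    then show ?thesis ..
  qed
qed

lemma dickson_seq:
  fixes s :: "nat \<Rightarrow> nat \<Rightarrow> nat"
  shows "\<exists>i j. i < j \<and> (\<forall>v<k. s i v \<le> s j v)"
proof -
  obtain Y where Y: "infinite Y" "\<forall>x\<in>Y. \<forall>y\<in>Y. x < y \<longrightarrow> (\<forall>v<k. s x v \<le> s y v)"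
    using dickson_set[where S=UNIV and f=s and k=k] by auto
  obtain x where x: "x \<in> Y" using infinite_imp_nonempty[OF Y(1)] by blast
  obtain y where "y \<in> Y" "x < y" using Y(1) unfolding infinite_nat_iff_unbounded by blast
  with x Y(2) show ?thesis by blast
qed



lemma lookup_single_mult_gen:
  fixes g :: "zpoly"
  shows "Poly_Mapping.lookup (Poly_Mapping.single m c * g) k = c * Sum_any (\<lambda>q. (Poly_Mapping.lookup g q when k = m + q))"
  by (simp add: lookup_mult lookup_single when_mult mult_when Sum_any_right_distrib)

lemma lookup_single_mult [simp]:
  fixes g :: "zpoly"
  shows "Poly_Mapping.lookup (Poly_Mapping.single m c * g) (m + x) = c * Poly_Mapping.lookup g x"
  unfolding lookup_single_mult_gen by simp

lemma lookup_single_mult_not: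
  fixes g :: "zpoly"
  assumes "\<not> (\<exists>x. k = m + x)"
  shows "Poly_Mapping.lookup (Poly_Mapping.single m c * g) k = 0"
  unfolding lookup_single_mult_gen using assms by simp



lemma mons_add: "m \<in> mons l \<Longrightarrow> m' \<in> mons l \<Longrightarrow> m + m' \<in> mons l"
  unfolding mons_def using keys_add[of m m'] by auto

lemma lookup_mons: "m \<in> mons l \<Longrightarrow> v \<ge> l \<Longrightarrow> Poly_Mapping.lookup m v = 0"
  unfolding mons_def by (auto simp: in_keys_iff)

lemma mons_diff: assumes "m \<in> mons l" shows "m - m' \<in> mons l"
  unfolding mons_def mem_Collect_eq
proof
  fix x assume "x \<in> Poly_Mapping.keys (m - m')"
  hence "Poly_Mapping.lookup m x \<noteq> 0" by (auto simp: in_keys_iff lookup_minus)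
  hence "x \<in> Poly_Mapping.keys m" by (simp add: in_keys_iff)
  with assms show "x \<in> {..<l}" by (auto simp: mons_def)
qed

lemma zero_mons [simp]: "0 \<in> mons l"
  unfolding mons_def by auto

lemma mon_dvd_add: "mon_dvd m m' \<Longrightarrow> m' = m + (m' - m)"
  unfolding mon_dvd_def by (intro poly_mapping_eqI) (simp add: lookup_add lookup_minus)

lemma mon_dvd_plus [simp]: "mon_dvd m (m + t)"
  unfolding mon_dvd_def by (simp add: lookup_add)

lemma keys_single_mult:
  fixes g :: zpoly
  shows "Poly_Mapping.keys (Poly_Mapping.single t c * g) \<subseteq> (\<lambda>x. t + x) ` Poly_Mapping.keys g"
  using keys_mult[of "Poly_Mapping.single t c" g] by (auto split: if_splits)

lemma zring_0 [simp]: "0 \<in> zring l" unfolding zring_def by auto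

lemma zring_add: "f \<in> zring l \<Longrightarrow> g \<in> zring l \<Longrightarrow> f + g \<in> zring l"
  unfolding zring_def using keys_add[of f g] by auto

lemma zring_uminus: "f \<in> zring l \<Longrightarrow> - f \<in> zring l"
  unfolding zring_def by auto

lemma zring_diff: "f \<in> zring l \<Longrightarrow> g \<in> zring l \<Longrightarrow> f - g \<in> zring l"
  using zring_add[of f l "-g"] zring_uminus[of g l] by simp

lemma zring_mult: "f \<in> zring l \<Longrightarrow> g \<in> zring l \<Longrightarrow> f * g \<in> zring l"
  unfolding zring_def using keys_mult[of f g] mons_add by blast

lemma zring_single: "m \<in> mons l \<Longrightarrow> Poly_Mapping.single m c \<in> zring l"
  unfolding zring_def by auto

lemma zring_1 [simp]: "(1::zpoly) \<in> zring l"
  unfolding zring_def by (simp add: keys_one)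



locale tord =
  fixes l :: nat and le :: "mon \<Rightarrow> mon \<Rightarrow> bool"
  assumes to: "term_order l le"
begin

lemma le_refl: "m \<in> mons l \<Longrightarrow> le m m"
  using to unfolding term_order_def by blast
lemma le_antisym: "m \<in> mons l \<Longrightarrow> m' \<in> mons l \<Longrightarrow> le m m' \<Longrightarrow> le m' m \<Longrightarrow> m = m'"
  using to unfolding term_order_def by blast
lemma le_trans: "m \<in> mons l \<Longrightarrow> m' \<in> mons l \<Longrightarrow> m'' \<in> mons l \<Longrightarrow> le m m' \<Longrightarrow> le m' m'' \<Longrightarrow> le m m''"
  using to unfolding term_order_def by blast
lemma le_total: "m \<in> mons l \<Longrightarrow> m' \<in> mons l \<Longrightarrow> le m m' \<or> le m' m"
  using to unfolding term_order_def by blast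
lemma le_zero: "m \<in> mons l \<Longrightarrow> le 0 m"
  using to unfolding term_order_def by blast
lemma le_mono: "m \<in> mons l \<Longrightarrow> m' \<in> mons l \<Longrightarrow> k \<in> mons l \<Longrightarrow> le m m' \<Longrightarrow> le (k + m) (k + m')"
  using to unfolding term_order_def by (metis add.commute)

lemma le_dvd: assumes "m \<in> mons l" "m' \<in> mons l" "mon_dvd m m'" shows "le m m'"
proof -
  have k: "m' - m \<in> mons l" using assms(2) by (rule mons_diff)
  have "le (m + 0) (m + (m' - m))"
    using le_mono[OF zero_mons k assms(1) le_zero[OF k]] .
  then show ?thesis using mon_dvd_add[OF assms(3)] by simp
qed

lemma max_exists: "finite A \<Longrightarrow> A \<noteq> {} \<Longrightarrow> A \<subseteq> mons l \<Longrightarrow> \<exists>m\<in>A. \<forall>m'\<in>A. le m' m"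
proof (induction A rule: finite_induct)
  case empty
  then show ?case by simp
next
  case (insert x F)
  show ?case
  proof (cases "F = {}")
    case True
    then show ?thesis using insert le_refl by auto
  next
    case False
    then obtain m where m: "m \<in> F" "\<forall>m'\<in>F. le m' m" using insert by auto
    have xm: "x \<in> mons l" "m \<in> mons l" using insert m by auto
    show ?thesis
    proof (cases "le x m")
      case True
      then show ?thesis using m by auto
    next
      case False
      then have "le m x" using le_total[OF xm] by auto
      have "le m' x" if "m' \<in> F" for m'
      proof -
        have "m' \<in> mons l" using that insert.prems by auto
        then show ?thesis using le_trans[OF _ xm(2) xm(1) _ \<open>le m x\<close>] m(2) that by blast
      qed
      then have "\<forall>m'\<in>insert x F. le m' x"
        using le_refl[OF xm(1)] by blast
      then show ?thesis by auto
    qed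
  qed
qed

lemma lt_eqI:
  fixes f :: zpoly
  assumes "f \<in> zring l" "m \<in> Poly_Mapping.keys f" "\<forall>m'\<in>Poly_Mapping.keys f. le m' m"
  shows "lt le f = m"
  unfolding lt_def
proof (rule the_equality)
  show "m \<in> Poly_Mapping.keys f \<and> (\<forall>m'\<in>Poly_Mapping.keys f. le m' m)" using assms by blast
next
  fix m' assume "m' \<in> Poly_Mapping.keys f \<and> (\<forall>m''\<in>Poly_Mapping.keys f. le m'' m')"
  then have "m' \<in> Poly_Mapping.keys f" "le m m'" "le m' m" using assms by auto
  moreover have "m' \<in> mons l" "m \<in> mons l" using assms(1,2) \<open>m' \<in> Poly_Mapping.keys f\<close>
    unfolding zring_def by auto
  ultimately show "m' = m" using le_antisym by blast
qed

lemma lt_props: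
  fixes f :: zpoly
  assumes "f \<in> zring l" "f \<noteq> 0"
  shows "lt le f \<in> Poly_Mapping.keys f" "\<forall>m'\<in>Poly_Mapping.keys f. le m' (lt le f)" "lt le f \<in> mons l"
    "lc le f \<noteq> 0"
proof -
  obtain m where m: "m \<in> Poly_Mapping.keys f" "\<forall>m'\<in>Poly_Mapping.keys f. le m' m"
    using max_exists[of "Poly_Mapping.keys f"] assms unfolding zring_def by auto
  have "lt le f = m" using lt_eqI[OF assms(1) m] .
  then show "lt le f \<in> Poly_Mapping.keys f" "\<forall>m'\<in>Poly_Mapping.keys f. le m' (lt le f)"
    using m by auto
  then show "lt le f \<in> mons l" "lc le f \<noteq> 0" using assms(1) unfolding zring_def lc_def
    by (auto simp: in_keys_iff)
qed

end


lemma poly_idealI: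
  assumes "finite F" "F \<subseteq> S" "\<forall>s\<in>F. c s \<in> zring l" "f = (\<Sum>s\<in>F. c s * s)"
  shows "f \<in> poly_ideal l S"
  unfolding poly_ideal_def mem_Collect_eq by (intro exI[of _ F] exI[of _ c]) (use assms in simp)

lemma poly_idealE:
  assumes "f \<in> poly_ideal l S"
  obtains F c where "f = (\<Sum>s\<in>F. c s * s)" "finite F" "F \<subseteq> S" "\<forall>s\<in>F. c s \<in> zring l"
proof -
  from assms obtain F c where "f = (\<Sum>s\<in>F. c s * s) \<and> finite F \<and> F \<subseteq> S \<and> (\<forall>s\<in>F. c s \<in> zring l)"
    unfolding poly_ideal_def mem_Collect_eq by blast
  then show ?thesis using that by blast
qed

lemma zring_sum: "finite F \<Longrightarrow> (\<forall>x\<in>F. h x \<in> zring l) \<Longrightarrow> sum h F \<in> zring l"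
  by (induction F rule: finite_induct) (auto intro: zring_add)

lemma ideal_zring: assumes "S \<subseteq> zring l" shows "poly_ideal l S \<subseteq> zring l"
proof
  fix f assume "f \<in> poly_ideal l S"
  then obtain F c where f: "f = (\<Sum>s\<in>F. c s * s)" "finite F" "F \<subseteq> S" "\<forall>s\<in>F. c s \<in> zring l"
    by (rule poly_idealE)
  have "\<forall>s\<in>F. c s * s \<in> zring l"
  proof
    fix s assume "s \<in> F"
    then have "c s \<in> zring l" "s \<in> zring l" using f(3,4) assms by auto
    then show "c s * s \<in> zring l" by (rule zring_mult)
  qed
  then show "f \<in> zring l" unfolding f(1) by (rule zring_sum[OF f(2)])
qed

lemma ideal_0 [simp]: "0 \<in> poly_ideal l S"
  by (rule poly_idealI[of "{}" _ "\<lambda>_. 0"]) auto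

lemma ideal_gen: assumes "s \<in> S" shows "s \<in> poly_ideal l S"
  by (rule poly_idealI[of "{s}" _ "\<lambda>_. 1"]) (use assms in auto)

lemma sum_if_subset: "finite F \<Longrightarrow> F1 \<subseteq> F \<Longrightarrow> (\<Sum>s\<in>F. if s \<in> F1 then h s else 0) = sum h F1"
proof -
  assume a: "finite F" "F1 \<subseteq> F"
  have "{x\<in>F. x\<in>F1} = F1" using a(2) by blast
  then show ?thesis using a(1) by (simp add: sum.If_cases Int_def)
qed

lemma ideal_add:
  assumes "f \<in> poly_ideal l S" "g \<in> poly_ideal l S"
  shows "f + g \<in> poly_ideal l S"
proof -
  obtain F1 c1 where f: "f = (\<Sum>s\<in>F1. c1 s * s)" "finite F1" "F1 \<subseteq> S" "\<forall>s\<in>F1. c1 s \<in> zring l"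
    using assms(1) by (rule poly_idealE)
  obtain F2 c2 where g: "g = (\<Sum>s\<in>F2. c2 s * s)" "finite F2" "F2 \<subseteq> S" "\<forall>s\<in>F2. c2 s \<in> zring l"
    using assms(2) by (rule poly_idealE)
  define c where "c s = (if s \<in> F1 then c1 s else 0) + (if s \<in> F2 then c2 s else 0)" for s
  have fin: "finite (F1 \<union> F2)" using f g by auto
  have "(\<Sum>s\<in>F1 \<union> F2. c s * s) = (\<Sum>s\<in>F1 \<union> F2. (if s \<in> F1 then c1 s * s else 0) + (if s \<in> F2 then c2 s * s else 0))"
    unfolding c_def by (intro sum.cong) (auto simp: distrib_right)
  also have "\<dots> = (\<Sum>s\<in>F1 \<union> F2. if s \<in> F1 then c1 s * s else 0) + (\<Sum>s\<in>F1 \<union> F2. if s \<in> F2 then c2 s * s else 0)"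
    by (rule sum.distrib)
  also have "\<dots> = f + g"
    using sum_if_subset[OF fin, of F1 "\<lambda>s. c1 s * s"] sum_if_subset[OF fin, of F2 "\<lambda>s. c2 s * s"] f(1) g(1)
    by auto
  finally have eq: "f + g = (\<Sum>s\<in>F1 \<union> F2. c s * s)" by simp
  have "\<forall>s\<in>F1 \<union> F2. c s \<in> zring l"
  proof
    fix s assume "s \<in> F1 \<union> F2"
    have "(if s \<in> F1 then c1 s else 0) \<in> zring l" using f(4) by auto
    moreover have "(if s \<in> F2 then c2 s else 0) \<in> zring l" using g(4) by auto
    ultimately show "c s \<in> zring l" unfolding c_def by (rule zring_add)
  qed
  then show ?thesis using eq fin f(3) g(3) by (intro poly_idealI[of "F1 \<union> F2" _ c]) auto
qed

lemma ideal_mult: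
  assumes "r \<in> zring l" "f \<in> poly_ideal l S"
  shows "r * f \<in> poly_ideal l S"
proof -
  obtain F c where f: "f = (\<Sum>s\<in>F. c s * s)" "finite F" "F \<subseteq> S" "\<forall>s\<in>F. c s \<in> zring l"
    using assms(2) by (rule poly_idealE)
  have "r * f = (\<Sum>s\<in>F. (r * c s) * s)" unfolding f(1) by (simp add: sum_distrib_left mult.assoc)
  moreover have "\<forall>s\<in>F. r * c s \<in> zring l" using f(4) assms(1) zring_mult by blast
  ultimately show ?thesis using f(2,3) by (intro poly_idealI[of F _ "\<lambda>s. r * c s"]) auto
qed

lemma ideal_uminus: "f \<in> poly_ideal l S \<Longrightarrow> - f \<in> poly_ideal l S"
  using ideal_mult[of "-1" l f S] zring_uminus[OF zring_1] by simp

lemma ideal_diff: "f \<in> poly_ideal l S \<Longrightarrow> g \<in> poly_ideal l S \<Longrightarrow> f - g \<in> poly_ideal l S"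
  using ideal_add[of f l S "-g"] ideal_uminus[of g l S] by simp

lemma ideal_sum: "finite F \<Longrightarrow> (\<forall>x\<in>F. h x \<in> poly_ideal l S) \<Longrightarrow> sum h F \<in> poly_ideal l S"
  by (induction F rule: finite_induct) (simp_all add: ideal_add)

lemma ideal_subset: assumes "T \<subseteq> poly_ideal l S" shows "poly_ideal l T \<subseteq> poly_ideal l S"
proof
  fix f assume "f \<in> poly_ideal l T"
  then obtain F c where f: "f = (\<Sum>s\<in>F. c s * s)" "finite F" "F \<subseteq> T" "\<forall>s\<in>F. c s \<in> zring l"
    by (rule poly_idealE)
  have "\<forall>s\<in>F. c s * s \<in> poly_ideal l S" using f(3,4) assms ideal_mult by blast
  then show "f \<in> poly_ideal l S" unfolding f(1) by (rule ideal_sum[OF f(2)])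
qed



context tord begin

definition R :: "(mon \<times> mon) set" where
  "R = {(m', m). m' \<in> mons l \<and> m \<in> mons l \<and> le m' m \<and> m' \<noteq> m}"

lemma wf_R: "wf R"
  unfolding wf_iff_no_infinite_down_chain
proof
  assume "\<exists>f. \<forall>i. (f (Suc i), f i) \<in> R"
  then obtain f where f: "\<And>i. (f (Suc i), f i) \<in> R" by blast
  have mons: "f i \<in> mons l" for i using f[of i] unfolding R_def by auto
  have stp: "le (f (Suc i)) (f i)" "f (Suc i) \<noteq> f i" for i using f[of i] unfolding R_def by auto
  have desc: "le (f j) (f n)" if "n \<le> j" for n j
    using that
  proof (induction j rule: dec_induct)
    case base
    then show ?case using le_refl[OF mons] .
  next
    case (step j)
    then show ?case using le_trans[OF mons mons mons, of "Suc j" j n] stp(1)[of j] by blast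
  qed
  obtain i j where ij: "i < j" "\<forall>v<l. Poly_Mapping.lookup (f i) v \<le> Poly_Mapping.lookup (f j) v"
    using dickson_seq[where s="\<lambda>i v. Poly_Mapping.lookup (f i) v" and k=l] by blast
  have "mon_dvd (f i) (f j)"
    unfolding mon_dvd_def
  proof
    fix v show "Poly_Mapping.lookup (f i) v \<le> Poly_Mapping.lookup (f j) v"
    proof (cases "v < l")
      case True then show ?thesis using ij by auto
    next
      case False then show ?thesis using lookup_mons[OF mons[of i]] by simp
    qed
  qed
  then have "le (f i) (f j)" using le_dvd mons by blast
  moreover have "le (f j) (f (Suc i))" using desc ij(1) by simp
  ultimately have "le (f i) (f (Suc i))" using le_trans[OF mons mons mons] by blast
  then have "f i = f (Suc i)" using le_antisym[OF mons mons] stp(1) by blast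
  then show False using stp(2) by metis
qed

lemma red_step:
  fixes f g :: zpoly
  assumes fz: "f \<in> zring l" and gz: "g \<in> zring l" and f0: "f \<noteq> 0" and g0: "g \<noteq> 0"
    and dv: "mon_dvd (lt le g) (lt le f)" and r: "r * lc le g = lc le f"
  shows "f - Poly_Mapping.single (lt le f - lt le g) r * g \<in> zring l"
    "f - Poly_Mapping.single (lt le f - lt le g) r * g = 0 \<or>
     (lt le (f - Poly_Mapping.single (lt le f - lt le g) r * g), lt le f) \<in> R"
proof -
  define t where "t = lt le f - lt le g"
  define h where "h = Poly_Mapping.single t r * g"
  have ltf: "lt le f \<in> mons l" "lt le f \<in> Poly_Mapping.keys f" "\<forall>m'\<in>Poly_Mapping.keys f. le m' (lt le f)"
    using lt_props[OF fz f0] by auto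
  have ltg: "lt le g \<in> mons l" "lt le g \<in> Poly_Mapping.keys g" "\<forall>m'\<in>Poly_Mapping.keys g. le m' (lt le g)"
    using lt_props[OF gz g0] by auto
  have tm: "t \<in> mons l" unfolding t_def by (rule mons_diff[OF ltf(1)])
  have tsum: "lt le f = t + lt le g" unfolding t_def using mon_dvd_add[OF dv] by (simp add: add.commute)
  have hz: "h \<in> zring l" unfolding h_def by (rule zring_mult[OF zring_single[OF tm] gz])
  have f'z: "f - h \<in> zring l" by (rule zring_diff[OF fz hz])
  then show "f - Poly_Mapping.single (lt le f - lt le g) r * g \<in> zring l" unfolding h_def t_def .
  have keysh: "le x (lt le f)" if xh: "x \<in> Poly_Mapping.keys h" for x
  proof -
    obtain y where y: "y \<in> Poly_Mapping.keys g" "x = t + y"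
      using xh keys_single_mult[of t r g] unfolding h_def by blast
    have ym: "y \<in> mons l" using y(1) gz unfolding zring_def by auto
    have "le (t + y) (t + lt le g)" using le_mono[OF ym ltg(1) tm] ltg(3) y(1) by blast
    then show ?thesis using y(2) tsum by simp
  qed
  have keysf': "le x (lt le f)" if "x \<in> Poly_Mapping.keys (f - h)" for x
  proof -
    have "Poly_Mapping.lookup f x \<noteq> 0 \<or> Poly_Mapping.lookup h x \<noteq> 0"
      using that by (auto simp: in_keys_iff lookup_minus)
    then show ?thesis using ltf(3) keysh by (auto simp: in_keys_iff)
  qed
  have zero: "Poly_Mapping.lookup (f - h) (lt le f) = 0"
    unfolding h_def using r tsum by (simp add: lookup_minus lc_def)
  show "f - Poly_Mapping.single (lt le f - lt le g) r * g = 0 \<or>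
     (lt le (f - Poly_Mapping.single (lt le f - lt le g) r * g), lt le f) \<in> R"
  proof (cases "f - h = 0")
    case True then show ?thesis unfolding h_def t_def by simp
  next
    case False
    have a: "lt le (f - h) \<in> Poly_Mapping.keys (f - h)" "lt le (f - h) \<in> mons l"
      using lt_props[OF f'z False] by auto
    have "lt le (f - h) \<noteq> lt le f" using a(1) zero by (auto simp: in_keys_iff)
    then have "(lt le (f - h), lt le f) \<in> R" unfolding R_def using a keysf' ltf(1) by auto
    then show ?thesis unfolding h_def t_def by simp
  qed
qed

lemma lm_dvd_nonzero:
  assumes "lm_dvd le g f" "f \<in> zring l" "f \<noteq> 0"
  shows "g \<noteq> 0"
proof
  assume "g = 0"
  then have "lc le g = 0" unfolding lc_def by simp
  then have "lc le f = 0" using assms(1) unfolding lm_dvd_def by simp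
  then show False using lt_props(4)[OF assms(2,3)] by simp
qed

lemma gb_generates:
  assumes Sz: "S \<subseteq> zring l" and GI: "G \<subseteq> poly_ideal l S"
    and strong: "\<forall>f\<in>poly_ideal l S. f \<noteq> 0 \<longrightarrow> (\<exists>g\<in>G. lm_dvd le g f)"
  shows "poly_ideal l S \<subseteq> poly_ideal l G"
proof -
  have Iz: "poly_ideal l S \<subseteq> zring l" by (rule ideal_zring[OF Sz])
  have main: "\<forall>f\<in>poly_ideal l S. f \<noteq> 0 \<longrightarrow> lt le f = m \<longrightarrow> f \<in> poly_ideal l G" for m
  proof (induction m rule: wf_induct[OF wf_R])
    case (1 m)
    show ?case
    proof (intro ballI impI)
      fix f assume fI: "f \<in> poly_ideal l S" and f0: "f \<noteq> 0" and fm: "lt le f = m"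
      have fz: "f \<in> zring l" using fI Iz by blast
      obtain g where g: "g \<in> G" "lm_dvd le g f" using strong fI f0 by blast
      have gI: "g \<in> poly_ideal l S" using g(1) GI by blast
      have gz: "g \<in> zring l" using gI Iz by blast
      have g0: "g \<noteq> 0" by (rule lm_dvd_nonzero[OF g(2) fz f0])
      define r where "r = lc le f div lc le g"
      have r: "r * lc le g = lc le f" using g(2) unfolding lm_dvd_def r_def by simp
      have dv: "mon_dvd (lt le g) (lt le f)" using g(2) unfolding lm_dvd_def by simp
      define t where "t = lt le f - lt le g"
      have tm: "t \<in> mons l" unfolding t_def by (rule mons_diff[OF lt_props(3)[OF fz f0]])
      define h where "h = Poly_Mapping.single t r * g"
      have hI: "h \<in> poly_ideal l S" unfolding h_def by (rule ideal_mult[OF zring_single[OF tm] gI])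
      have hG: "h \<in> poly_ideal l G" unfolding h_def by (rule ideal_mult[OF zring_single[OF tm] ideal_gen[OF g(1)]])
      have f'I: "f - h \<in> poly_ideal l S" by (rule ideal_diff[OF fI hI])
      have alt: "f - h = 0 \<or> (lt le (f - h), lt le f) \<in> R"
        using red_step(2)[OF fz gz f0 g0 dv r] unfolding h_def t_def .
      have "f - h \<in> poly_ideal l G"
      proof (cases "f - h = 0")
        case True then show ?thesis by simp
      next
        case False
        then have "(lt le (f - h), m) \<in> R" using alt fm by simp
        then show ?thesis using 1 f'I False by blast
      qed
      then have "(f - h) + h \<in> poly_ideal l G" by (rule ideal_add[OF _ hG])
      then show "f \<in> poly_ideal l G" by simp
    qed
  qed
  show ?thesis
  proof
    fix f assume "f \<in> poly_ideal l S"
    then show "f \<in> poly_ideal l G" using main[of "lt le f"] by (cases "f = 0") auto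
  qed
qed

end


definition deg :: "nat \<Rightarrow> mon \<Rightarrow> nat" where
  "deg l m = (\<Sum>v<l. Poly_Mapping.lookup m v)"

locale gbctx = tord +
  fixes S :: "zpoly set"
  assumes Sz: "S \<subseteq> zring l"
begin

abbreviation "I \<equiv> poly_ideal l S"

lemma Iz: "I \<subseteq> zring l" by (rule ideal_zring[OF Sz])

definition P :: "int \<Rightarrow> mon \<Rightarrow> bool" where
  "P c m \<longleftrightarrow> (\<exists>f\<in>I. f \<noteq> 0 \<and> lt le f = m \<and> \<bar>lc le f\<bar> = c)"

definition minimal :: "int \<Rightarrow> mon \<Rightarrow> bool" where
  "minimal c m \<longleftrightarrow> P c m \<and> (\<forall>c' m'. P c' m' \<and> c' dvd c \<and> mon_dvd m' m \<longrightarrow> c' = c \<and> m' = m)"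

lemma minimalD: "minimal c m \<Longrightarrow> P c' m' \<Longrightarrow> c' dvd c \<Longrightarrow> mon_dvd m' m \<Longrightarrow> c' = c \<and> m' = m"
  unfolding minimal_def by blast

lemma P_props: assumes "P c m" shows "c > 0" "m \<in> mons l"
proof -
  obtain f where f: "f \<in> I" "f \<noteq> 0" "lt le f = m" "\<bar>lc le f\<bar> = c" using assms unfolding P_def by blast
  have fz: "f \<in> zring l" using f(1) Iz by blast
  show "c > 0" using lt_props(4)[OF fz f(2)] f(4) by auto
  show "m \<in> mons l" using lt_props(3)[OF fz f(2)] f(3) by simp
qed

lemma mon_dvd_refl: "mon_dvd m m" unfolding mon_dvd_def by simp
lemma mon_dvd_trans: "mon_dvd a b \<Longrightarrow> mon_dvd b c \<Longrightarrow> mon_dvd a c"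
  unfolding mon_dvd_def using order_trans by blast

lemma exists_minimal_aux:
  "\<forall>c m. nat c + deg l m = N \<longrightarrow> P c m \<longrightarrow> (\<exists>c' m'. minimal c' m' \<and> c' dvd c \<and> mon_dvd m' m)"
proof (induction N rule: less_induct)
  case (less N)
  show ?case
  proof (intro allI impI)
    fix c m assume N: "nat c + deg l m = N" and Pcm: "P c m"
    show "\<exists>c' m'. minimal c' m' \<and> c' dvd c \<and> mon_dvd m' m"
    proof (cases "minimal c m")
      case True
      then show ?thesis using mon_dvd_refl[of m] dvd_refl[of c] by blast
    next
      case False
      then obtain c' m' where c': "P c' m'" "c' dvd c" "mon_dvd m' m" "\<not> (c' = c \<and> m' = m)"
        using Pcm unfolding minimal_def by blast
      have cpos: "c > 0" "c' > 0" using P_props Pcm c'(1) by auto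
      have mm: "m \<in> mons l" "m' \<in> mons l" using P_props Pcm c'(1) by auto
      have cle: "c' \<le> c" using zdvd_imp_le[OF c'(2) cpos(1)] .
      have dle: "deg l m' \<le> deg l m" unfolding deg_def
        using c'(3) unfolding mon_dvd_def by (intro sum_mono) auto
      have lessN: "nat c' + deg l m' < N"
      proof (cases "c' = c")
        case False
        then have "c' < c" using cle by simp
        then show ?thesis using N dle cpos by simp
      next
        case True
        then have "m' \<noteq> m" using c'(4) by simp
        then obtain v where v: "Poly_Mapping.lookup m' v \<noteq> Poly_Mapping.lookup m v"
          using poly_mapping_eqI[of m' m] by blast
        have vl: "v < l"
        proof (rule ccontr)
          assume "\<not> v < l"
          then show False using v lookup_mons[OF mm(1)] lookup_mons[OF mm(2)] by simp
        qed
        have "deg l m' < deg l m" unfolding deg_def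
        proof (rule sum_strict_mono_ex1)
          show "finite {..<l}" by simp
          show "\<forall>x\<in>{..<l}. Poly_Mapping.lookup m' x \<le> Poly_Mapping.lookup m x"
            using c'(3) unfolding mon_dvd_def by auto
          show "\<exists>a\<in>{..<l}. Poly_Mapping.lookup m' a < Poly_Mapping.lookup m a"
          proof
            have "Poly_Mapping.lookup m' v \<le> Poly_Mapping.lookup m v" using c'(3) unfolding mon_dvd_def by blast
            then show "Poly_Mapping.lookup m' v < Poly_Mapping.lookup m v" using v by simp
            show "v \<in> {..<l}" using vl by simp
          qed
        qed
        then show ?thesis using N True by simp
      qed
      then obtain c'' m'' where "minimal c'' m''" "c'' dvd c'" "mon_dvd m'' m'"
        using less.IH[rule_format, OF lessN refl c'(1)] by (elim exE conjE)
      then show ?thesis using dvd_trans[OF _ c'(2)] mon_dvd_trans[OF _ c'(3)] by blast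
    qed
  qed
qed

lemma exists_minimal: "P c m \<Longrightarrow> \<exists>c' m'. minimal c' m' \<and> c' dvd c \<and> mon_dvd m' m"
  using exists_minimal_aux by blast

lemma gcd_step:
  assumes Pi: "P ci mi" and Pj: "P cj mj" and dv: "mon_dvd mi mj"
  shows "P (gcd ci cj) mj"
proof -
  obtain fi where fi: "fi \<in> I" "fi \<noteq> 0" "lt le fi = mi" "\<bar>lc le fi\<bar> = ci" using Pi unfolding P_def by blast
  obtain fj where fj: "fj \<in> I" "fj \<noteq> 0" "lt le fj = mj" "\<bar>lc le fj\<bar> = cj" using Pj unfolding P_def by blast
  have fiz: "fi \<in> zring l" and fjz: "fj \<in> zring l" using fi(1) fj(1) Iz by auto
  note lti = lt_props[OF fiz fi(2)] and ltj = lt_props[OF fjz fj(2)]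
  obtain u w where uw: "u * lc le fi + w * lc le fj = gcd (lc le fi) (lc le fj)"
    using bezout_int by blast
  have gg: "gcd (lc le fi) (lc le fj) = gcd ci cj" using fi(4) fj(4) by (metis gcd_abs1_int gcd_abs2_int)
  define t where "t = mj - mi"
  have tm: "t \<in> mons l" unfolding t_def using ltj(3) fj(3) by (simp add: mons_diff)
  have mim: "mi \<in> mons l" using lti(3) fi(3) by simp
  have mjm: "mj \<in> mons l" using ltj(3) fj(3) by simp
  have tsum: "mj = t + mi" unfolding t_def using mon_dvd_add[OF dv] by (simp add: add.commute)
  define h where "h = Poly_Mapping.single t u * fi + Poly_Mapping.single 0 w * fj"
  have hI: "h \<in> I" unfolding h_def
    by (intro ideal_add ideal_mult zring_single tm zero_mons fi(1) fj(1))
  have hz: "h \<in> zring l" using hI Iz by blast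
  have lookup_h: "Poly_Mapping.lookup h mj = gcd ci cj"
  proof -
    have "Poly_Mapping.lookup (Poly_Mapping.single t u * fi) mj = u * lc le fi"
      unfolding tsum lc_def using fi(3) by simp
    moreover have "Poly_Mapping.lookup (Poly_Mapping.single 0 w * fj) mj = w * lc le fj"
      using lookup_single_mult[of 0 w fj mj] fj(3) unfolding lc_def by simp
    ultimately show ?thesis unfolding h_def using uw gg by (simp add: lookup_add)
  qed
  have cipos: "ci > 0" using P_props(1)[OF Pi] .
  then have gpos: "gcd ci cj > 0" by simp
  have h0: "h \<noteq> 0" using lookup_h gpos by auto
  have mjk: "mj \<in> Poly_Mapping.keys h" using lookup_h gpos by (simp add: in_keys_iff)
  have bound: "le x mj" if xk: "x \<in> Poly_Mapping.keys h" for x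
  proof -
    have "x \<in> Poly_Mapping.keys (Poly_Mapping.single t u * fi) \<or> x \<in> Poly_Mapping.keys (Poly_Mapping.single 0 w * fj)"
      using xk keys_add[of "Poly_Mapping.single t u * fi" "Poly_Mapping.single 0 w * fj"] unfolding h_def by blast
    then show ?thesis
    proof
      assume "x \<in> Poly_Mapping.keys (Poly_Mapping.single t u * fi)"
      then obtain y where y: "y \<in> Poly_Mapping.keys fi" "x = t + y"
        using keys_single_mult[of t u fi] by blast
      have ym: "y \<in> mons l" using y(1) fiz unfolding zring_def by auto
      have "le (t + y) (t + mi)" using le_mono[OF ym mim tm] lti(2) fi(3) y(1) by blast
      then show ?thesis using y(2) tsum by simp
    next
      assume "x \<in> Poly_Mapping.keys (Poly_Mapping.single 0 w * fj)"
      then obtain y where y: "y \<in> Poly_Mapping.keys fj" "x = 0 + y"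
        using keys_single_mult[of 0 w fj] by blast
      then show ?thesis using ltj(2) fj(3) by simp
    qed
  qed
  have lth: "lt le h = mj" by (rule lt_eqI[OF hz mjk]) (use bound in blast)
  have "\<bar>lc le h\<bar> = gcd ci cj" unfolding lc_def lth lookup_h by simp
  then show ?thesis unfolding P_def using hI h0 lth by blast
qed

lemma finite_minimal: "finite {(c, m). minimal c m}"
proof (rule ccontr)
  assume inf: "infinite {(c, m). minimal c m}"
  obtain f :: "nat \<Rightarrow> int \<times> mon" where f: "inj f" "range f \<subseteq> {(c, m). minimal c m}"
    using infinite_countable_subset[OF inf] by (elim exE conjE)
  have mf: "minimal (fst (f i)) (snd (f i))" for i
  proof -
    have "f i \<in> {(c, m). minimal c m}" by (rule subsetD[OF f(2) rangeI])
    then show ?thesis by (simp add: case_prod_unfold)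
  qed
  have Pf: "P (fst (f i)) (snd (f i))" for i using mf[of i] unfolding minimal_def by blast
  define s where "s i v = (if v = 0 then nat (fst (f i)) else Poly_Mapping.lookup (snd (f i)) (v - 1))" for i v
  obtain i j where ij: "i < j" "\<forall>v<Suc l. s i v \<le> s j v"
    using dickson_seq[where s=s and k="Suc l"] by blast
  define ci mi cj mj where "ci = fst (f i)" "mi = snd (f i)" "cj = fst (f j)" "mj = snd (f j)"
  have Pi: "P ci mi" and Pj: "P cj mj" using Pf unfolding ci_mi_cj_mj_def by auto
  have cpos: "ci > 0" "cj > 0" using P_props(1) Pi Pj by auto
  have mim: "mi \<in> mons l" and mjm: "mj \<in> mons l" using P_props(2) Pi Pj by auto
  have cle: "ci \<le> cj" using ij(2)[rule_format, of 0] cpos unfolding s_def ci_mi_cj_mj_def by simp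
  have dv: "mon_dvd mi mj"
    unfolding mon_dvd_def
  proof
    fix v show "Poly_Mapping.lookup mi v \<le> Poly_Mapping.lookup mj v"
    proof (cases "v < l")
      case True
      then show ?thesis using ij(2)[rule_format, of "Suc v"] unfolding s_def ci_mi_cj_mj_def by simp
    next
      case False then show ?thesis using lookup_mons[OF mim] by simp
    qed
  qed
  have "P (gcd ci cj) mj" by (rule gcd_step[OF Pi Pj dv])
  have mj: "minimal cj mj" using mf[of j] unfolding ci_mi_cj_mj_def .
  have "gcd ci cj = cj" using minimalD[OF mj \<open>P (gcd ci cj) mj\<close> gcd_dvd2 mon_dvd_refl] by simp
  then have "cj dvd ci" by (metis gcd_dvd1)
  then have "cj \<le> ci" using zdvd_imp_le[of cj ci] cpos by simp
  then have "ci = cj" using cle by simp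
  then have "ci = cj \<and> mi = mj" using minimalD[OF mj Pi _ dv] by simp
  then have "f i = f j" unfolding ci_mi_cj_mj_def by (simp add: prod_eq_iff)
  then show False using f(1) ij(1) by (simp add: inj_eq)
qed

definition chooseF :: "int \<Rightarrow> mon \<Rightarrow> zpoly" where
  "chooseF c m = (SOME f. f \<in> I \<and> f \<noteq> 0 \<and> lt le f = m \<and> \<bar>lc le f\<bar> = c)"

lemma chooseF: assumes "P c m"
  shows "chooseF c m \<in> I" "chooseF c m \<noteq> 0" "lt le (chooseF c m) = m" "\<bar>lc le (chooseF c m)\<bar> = c"
proof -
  have "\<exists>f. f \<in> I \<and> f \<noteq> 0 \<and> lt le f = m \<and> \<bar>lc le f\<bar> = c" using assms unfolding P_def by blast
  then have "chooseF c m \<in> I \<and> chooseF c m \<noteq> 0 \<and> lt le (chooseF c m) = m \<and> \<bar>lc le (chooseF c m)\<bar> = c"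
    unfolding chooseF_def by (rule someI_ex)
  then show "chooseF c m \<in> I" "chooseF c m \<noteq> 0" "lt le (chooseF c m) = m" "\<bar>lc le (chooseF c m)\<bar> = c"
    by auto
qed

definition GB :: "zpoly set" where
  "GB = (\<lambda>(c, m). chooseF c m) ` {(c, m). minimal c m}"

lemma GB_elem: assumes "g \<in> GB"
  obtains c m where "minimal c m" "g = chooseF c m"
  using assms unfolding GB_def by auto

lemma GB_sub: "GB \<subseteq> I - {0}"
proof
  fix g assume "g \<in> GB"
  then obtain c m where cm: "minimal c m" "g = chooseF c m" by (rule GB_elem)
  have "P c m" using cm(1) unfolding minimal_def by blast
  then show "g \<in> I - {0}" using chooseF cm(2) by auto
qed

lemma GB_strong: assumes fI: "f \<in> I" and f0: "f \<noteq> 0" shows "\<exists>g\<in>GB. lm_dvd le g f"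
proof -
  have "P \<bar>lc le f\<bar> (lt le f)" unfolding P_def using fI f0 by blast
  then obtain c m where cm: "minimal c m" "c dvd \<bar>lc le f\<bar>" "mon_dvd m (lt le f)"
    using exists_minimal by blast
  have Pcm: "P c m" using cm(1) unfolding minimal_def by blast
  define g where "g = chooseF c m"
  have gG: "g \<in> GB" unfolding GB_def g_def using cm(1) by force
  have "lc le g dvd lc le f" using chooseF(4)[OF Pcm] cm(2) unfolding g_def
    by (metis abs_dvd_iff dvd_abs_iff)
  moreover have "mon_dvd (lt le g) (lt le f)" using chooseF(3)[OF Pcm] cm(3) unfolding g_def by simp
  ultimately show ?thesis using gG unfolding lm_dvd_def by blast
qed

lemma GB_min: "min_strong_GB l le I GB"
  unfolding min_strong_GB_def
proof (intro conjI ballI impI)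
  show "finite GB" unfolding GB_def using finite_minimal by simp
  show "GB \<subseteq> I - {0}" by (rule GB_sub)
  show "poly_ideal l GB = I"
  proof
    show "poly_ideal l GB \<subseteq> I" by (rule ideal_subset) (use GB_sub in blast)
    show "I \<subseteq> poly_ideal l GB" by (rule gb_generates[OF Sz]) (use GB_sub GB_strong in blast)+
  qed
  show "\<exists>g\<in>GB. lm_dvd le g f" if "f \<in> I" "f \<noteq> 0" for f using GB_strong that by blast
  show "\<not> lm_dvd le g g'" if gG: "g \<in> GB" and g'G: "g' \<in> GB" and ne: "g \<noteq> g'" for g g'
  proof
    assume dv: "lm_dvd le g g'"
    obtain c m where cm: "minimal c m" "g = chooseF c m" using gG by (rule GB_elem)
    obtain c' m' where cm': "minimal c' m'" "g' = chooseF c' m'" using g'G by (rule GB_elem)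
    have P1: "P c m" using cm(1) unfolding minimal_def by blast
    have P2: "P c' m'" using cm'(1) unfolding minimal_def by blast
    have "c dvd c'" using dv chooseF(4)[OF P1] chooseF(4)[OF P2] cm(2) cm'(2) unfolding lm_dvd_def
      by (metis abs_dvd_iff dvd_abs_iff)
    moreover have "mon_dvd m m'" using dv chooseF(3)[OF P1] chooseF(3)[OF P2] cm(2) cm'(2) unfolding lm_dvd_def
      by simp
    ultimately have "c = c' \<and> m = m'" using minimalD[OF cm'(1) P1] by blast
    then show False using ne cm(2) cm'(2) by simp
  qed
qed

end


lemma lookup_single_mult_smult:
  fixes g :: zpoly
  shows "Poly_Mapping.lookup (Poly_Mapping.single t (p * q) * g) x = p * Poly_Mapping.lookup (Poly_Mapping.single t q * g) x"
  unfolding lookup_single_mult_gen by (simp add: mult.assoc)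

context gbctx begin

lemma p_divides:
  fixes p :: int
  assumes p: "prime p" and nd: "\<forall>g\<in>GB. \<not> p dvd lc le g"
  shows "\<forall>f\<in>I. (\<forall>x. p dvd Poly_Mapping.lookup f x) \<longrightarrow> (\<exists>h\<in>I. \<forall>x. Poly_Mapping.lookup f x = p * Poly_Mapping.lookup h x)"
proof -
  have main: "\<forall>f\<in>I. f \<noteq> 0 \<longrightarrow> lt le f = m \<longrightarrow> (\<forall>x. p dvd Poly_Mapping.lookup f x) \<longrightarrow>
      (\<exists>h\<in>I. \<forall>x. Poly_Mapping.lookup f x = p * Poly_Mapping.lookup h x)" for m
  proof (induction m rule: wf_induct[OF wf_R])
    case (1 m)
    show ?case
    proof (intro ballI impI)
      fix f assume fI: "f \<in> I" and f0: "f \<noteq> 0" and fm: "lt le f = m"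
        and fp: "\<forall>x. p dvd Poly_Mapping.lookup f x"
      have fz: "f \<in> zring l" using fI Iz by blast
      obtain g where g: "g \<in> GB" "lm_dvd le g f" using GB_strong[OF fI f0] by blast
      have gI: "g \<in> I" using g(1) GB_sub by blast
      have gz: "g \<in> zring l" using gI Iz by blast
      have g0: "g \<noteq> 0" by (rule lm_dvd_nonzero[OF g(2) fz f0])
      obtain e where e: "lc le f = p * e" using fp unfolding lc_def by (meson dvdE)
      have cop: "coprime p (lc le g)" using prime_imp_coprime[OF p] nd g(1) by blast
      have "lc le g dvd p * e" using g(2) e unfolding lm_dvd_def by simp
      then have "lc le g dvd e" using cop by (simp add: coprime_commute coprime_dvd_mult_right_iff)
      then obtain q where q: "e = lc le g * q" by (rule dvdE)
      have r: "(p * q) * lc le g = lc le f" using e q by simp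
      have dv: "mon_dvd (lt le g) (lt le f)" using g(2) unfolding lm_dvd_def by simp
      define t where "t = lt le f - lt le g"
      have tm: "t \<in> mons l" unfolding t_def by (rule mons_diff[OF lt_props(3)[OF fz f0]])
      define h1 where "h1 = Poly_Mapping.single t q * g"
      have h1I: "h1 \<in> I" unfolding h1_def by (rule ideal_mult[OF zring_single[OF tm] gI])
      define h where "h = Poly_Mapping.single t (p * q) * g"
      have hI: "h \<in> I" unfolding h_def by (rule ideal_mult[OF zring_single[OF tm] gI])
      have hh1: "Poly_Mapping.lookup h x = p * Poly_Mapping.lookup h1 x" for x
        unfolding h_def h1_def by (rule lookup_single_mult_smult)
      have f'I: "f - h \<in> I" by (rule ideal_diff[OF fI hI])
      have f'p: "\<forall>x. p dvd Poly_Mapping.lookup (f - h) x"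
        using fp hh1 by (simp add: lookup_minus)
      have alt: "f - h = 0 \<or> (lt le (f - h), lt le f) \<in> R"
        using red_step(2)[OF fz gz f0 g0 dv r] unfolding h_def t_def .
      obtain h' where h': "h' \<in> I" "\<forall>x. Poly_Mapping.lookup (f - h) x = p * Poly_Mapping.lookup h' x"
      proof (cases "f - h = 0")
        case True
        then show ?thesis using that[of 0] by simp
      next
        case False
        then have "(lt le (f - h), m) \<in> R" using alt fm by simp
        then show ?thesis using 1 f'I False f'p that by blast
      qed
      have "h' + h1 \<in> I" by (rule ideal_add[OF h'(1) h1I])
      moreover have "\<forall>x. Poly_Mapping.lookup f x = p * Poly_Mapping.lookup (h' + h1) x"
      proof
        fix x
        have "Poly_Mapping.lookup f x = Poly_Mapping.lookup (f - h) x + Poly_Mapping.lookup h x"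
          by (simp add: lookup_minus)
        also have "\<dots> = p * Poly_Mapping.lookup (h' + h1) x"
          using h'(2) hh1 by (simp add: lookup_add distrib_left)
        finally show "Poly_Mapping.lookup f x = p * Poly_Mapping.lookup (h' + h1) x" .
      qed
      ultimately show "\<exists>h\<in>I. \<forall>x. Poly_Mapping.lookup f x = p * Poly_Mapping.lookup h x" by blast
    qed
  qed
  show ?thesis
  proof (intro ballI impI)
    fix f assume "f \<in> I" "\<forall>x. p dvd Poly_Mapping.lookup f x"
    then show "\<exists>h\<in>I. \<forall>x. Poly_Mapping.lookup f x = p * Poly_Mapping.lookup h x"
      using main[of "lt le f"] by (cases "f = 0") (auto intro: bexI[of _ 0])
  qed
qed

end


lemma single1_eq: "(Poly_Mapping.single k' (1::nat) = Poly_Mapping.single k 1) = (k' = k)"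
proof
  assume "Poly_Mapping.single k' (1::nat) = Poly_Mapping.single k 1"
  then have "Poly_Mapping.lookup (Poly_Mapping.single k' (1::nat)) k = Poly_Mapping.lookup (Poly_Mapping.single k 1) k"
    by simp
  then show "k' = k" by (simp add: lookup_single when_def split: if_splits)
qed simp

lemma single1_mons: "k < l \<Longrightarrow> Poly_Mapping.single k (1::nat) \<in> mons l"
  unfolding mons_def by auto

lemma lin_form_zring: "lin_form l a \<in> zring l"
  unfolding lin_form_def
proof (rule zring_sum)
  show "\<forall>x\<in>{..<l}. Poly_Mapping.single (Poly_Mapping.single x 1) (a x) \<in> zring l"
    using zring_single[OF single1_mons] by blast
qed simp

lemma lookup_lin_form_gen:
  "Poly_Mapping.lookup (lin_form l a) m = (\<Sum>k'<l. if Poly_Mapping.single k' 1 = m then a k' else 0)"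
  unfolding lin_form_def lookup_sum by (intro sum.cong) (auto simp: lookup_single when_def)

lemma lookup_lin_form: "k < l \<Longrightarrow> Poly_Mapping.lookup (lin_form l a) (Poly_Mapping.single k 1) = a k"
  unfolding lookup_lin_form_gen single1_eq by simp

lemma lookup_lin_form_other: "(\<forall>k<l. m \<noteq> Poly_Mapping.single k 1) \<Longrightarrow> Poly_Mapping.lookup (lin_form l a) m = 0"
  unfolding lookup_lin_form_gen by (intro sum.neutral) auto

lemma lookup_mult_lin_form:
  fixes c :: zpoly
  assumes "k < l"
  shows "Poly_Mapping.lookup (c * lin_form l a) (Poly_Mapping.single k 1) = Poly_Mapping.lookup c 0 * a k"
proof -
  have "Poly_Mapping.lookup (c * lin_form l a) (Poly_Mapping.single k 1) =
    (\<Sum>k'<l. Poly_Mapping.lookup (Poly_Mapping.single (Poly_Mapping.single k' 1) (a k') * c) (Poly_Mapping.single k 1))"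
    unfolding lin_form_def sum_distrib_left lookup_sum by (simp add: mult.commute)
  also have "\<dots> = (\<Sum>k'<l. if k' = k then a k * Poly_Mapping.lookup c 0 else 0)"
  proof (intro sum.cong refl)
    fix k' assume "k' \<in> {..<l}"
    show "Poly_Mapping.lookup (Poly_Mapping.single (Poly_Mapping.single k' 1) (a k') * c) (Poly_Mapping.single k 1) =
      (if k' = k then a k * Poly_Mapping.lookup c 0 else 0)"
    proof (cases "k' = k")
      case True
      then show ?thesis using lookup_single_mult[of "Poly_Mapping.single k 1" "a k" c 0] by simp
    next
      case False
      have "\<not> (\<exists>x. Poly_Mapping.single k (1::nat) = Poly_Mapping.single k' 1 + x)"
      proof
        assume "\<exists>x. Poly_Mapping.single k (1::nat) = Poly_Mapping.single k' 1 + x"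
        then obtain x where "Poly_Mapping.single k (1::nat) = Poly_Mapping.single k' 1 + x" by blast
        then have "Poly_Mapping.lookup (Poly_Mapping.single k (1::nat)) k' = Poly_Mapping.lookup (Poly_Mapping.single k' 1 + x) k'"
          by simp
        then show False using False by (simp add: lookup_add lookup_single)
      qed
      then show ?thesis using False lookup_single_mult_not by simp
    qed
  qed
  also have "\<dots> = a k * Poly_Mapping.lookup c 0" using assms by simp
  finally show ?thesis by simp
qed

lemma hyperplane_scale:
  fixes u v :: int
  assumes "u \<noteq> 0" "v \<noteq> 0" "\<forall>k<l. u * a k = v * b k"
  shows "hyperplane l a = hyperplane l b"
proof -
  have eq: "of_int v * (\<Sum>k<l. of_int (b k) * x k) = of_int u * (\<Sum>k<l. of_int (a k) * (x k :: rat))" for x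
  proof -
    have "of_int v * (\<Sum>k<l. of_int (b k) * x k) = (\<Sum>k<l. of_int (v * b k) * x k)"
      by (simp add: sum_distrib_left mult.assoc)
    also have "\<dots> = (\<Sum>k<l. of_int (u * a k) * x k)" using assms(3) by simp
    also have "\<dots> = of_int u * (\<Sum>k<l. of_int (a k) * (x k :: rat))"
      by (simp add: sum_distrib_left mult.assoc)
    finally show ?thesis .
  qed
  have "((\<Sum>k<l. of_int (a k) * x k) = 0) = ((\<Sum>k<l. of_int (b k) * (x k :: rat)) = 0)" for x
  proof
    assume "(\<Sum>k<l. of_int (a k) * x k) = 0"
    then have "of_int v * (\<Sum>k<l. of_int (b k) * x k) = 0" using eq[of x] by simp
    then show "(\<Sum>k<l. of_int (b k) * (x k :: rat)) = 0" using assms(2) by simp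
  next
    assume "(\<Sum>k<l. of_int (b k) * (x k :: rat)) = 0"
    then have "of_int u * (\<Sum>k<l. of_int (a k) * x k) = 0" using eq[of x] by simp
    then show "(\<Sum>k<l. of_int (a k) * x k) = 0" using assms(1) by simp
  qed
  then show ?thesis unfolding hyperplane_def by auto
qed

lemma sum_two_subset:
  assumes "F \<subseteq> {A, B}" "A \<noteq> B"
  shows "sum \<phi> F = (if A \<in> F then \<phi> A else 0) + (if B \<in> F then (\<phi> B :: int) else 0)"
proof -
  have "sum \<phi> F = (\<Sum>s\<in>{A, B}. if s \<in> F then \<phi> s else 0)"
    using sum_if_subset[of "{A, B}" F \<phi>] assms(1) by simp
  also have "\<dots> = (if A \<in> F then \<phi> A else 0) + (if B \<in> F then \<phi> B else 0)"
    using assms(2) by simp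
  finally show ?thesis .
qed



theorem lemma6p1:
  fixes l n :: nat and \<alpha> :: "nat \<Rightarrow> nat \<Rightarrow> int"
    and le :: "mon \<Rightarrow> mon \<Rightarrow> bool" and p :: int and i j :: nat
  assumes nonzero: "\<And>r. r \<in> {1..n} \<Longrightarrow> \<exists>k<l. \<alpha> r k \<noteq> 0"
    and supp: "\<And>r k. r \<in> {1..n} \<Longrightarrow> k \<ge> l \<Longrightarrow> \<alpha> r k = 0"
    and primitive: "\<And>r q. r \<in> {1..n} \<Longrightarrow> prime q \<Longrightarrow> \<exists>k<l. \<not> q dvd \<alpha> r k"
    and distinct: "\<And>r s. r \<in> {1..n} \<Longrightarrow> s \<in> {1..n} \<Longrightarrow> r \<noteq> s \<Longrightarrow>
                      hyperplane l (\<alpha> r) \<noteq> hyperplane l (\<alpha> s)"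
    and essential: "\<And>x. (\<forall>k\<ge>l. x k = 0) \<Longrightarrow> (\<forall>r\<in>{1..n}. x \<in> hyperplane l (\<alpha> r)) \<Longrightarrow> x = (\<lambda>_. 0)"
    and sigma: "term_order l le"
    and p: "prime p"
    and ij: "1 \<le> i" "i < j" "j \<le> n"
    and red: "\<exists>\<beta>::int. \<not> p dvd \<beta> \<and> (\<forall>k<l. \<alpha> i k mod p = (\<beta> * \<alpha> j k) mod p)"
  shows "\<not> lucky l le (poly_ideal l {lin_form l (\<alpha> i), lin_form l (\<alpha> j)}) p"
proof
  assume lucky: "lucky l le (poly_ideal l {lin_form l (\<alpha> i), lin_form l (\<alpha> j)}) p"
  define A where "A = lin_form l (\<alpha> i)"
  define B where "B = lin_form l (\<alpha> j)"
  have Az: "A \<in> zring l" and Bz: "B \<in> zring l" unfolding A_def B_def by (rule lin_form_zring)+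
  interpret gbctx l le "{A, B}"
    by unfold_locales (use sigma Az Bz in auto)
  have iin: "i \<in> {1..n}" and jin: "j \<in> {1..n}" and ijne: "i \<noteq> j" using ij by auto
  have hne: "hyperplane l (\<alpha> i) \<noteq> hyperplane l (\<alpha> j)" by (rule distinct[OF iin jin ijne])
  have nd: "\<forall>g\<in>GB. \<not> p dvd lc le g"
    using lucky GB_min unfolding lucky_def A_def B_def by blast
  have AB: "A \<noteq> B"
  proof
    assume "A = B"
    then have "\<forall>k<l. 1 * \<alpha> i k = 1 * \<alpha> j k"
      unfolding A_def B_def by (metis lookup_lin_form mult_1)
    then have "hyperplane l (\<alpha> i) = hyperplane l (\<alpha> j)" by (intro hyperplane_scale[of 1 1]) auto
    then show False using hne by simp
  qed
  obtain \<beta> where \<beta>: "\<not> p dvd \<beta>" "\<forall>k<l. \<alpha> i k mod p = (\<beta> * \<alpha> j k) mod p" using red by blast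
  define f0 where "f0 = A - Poly_Mapping.single 0 \<beta> * B"
  have f0I: "f0 \<in> I" unfolding f0_def
    by (intro ideal_diff ideal_mult ideal_gen zring_single zero_mons) auto
  have lf0: "Poly_Mapping.lookup f0 x = Poly_Mapping.lookup A x - \<beta> * Poly_Mapping.lookup B x" for x
    unfolding f0_def using lookup_single_mult[of 0 \<beta> B x] by (simp add: lookup_minus)
  have f0p: "\<forall>x. p dvd Poly_Mapping.lookup f0 x"
  proof
    fix x
    show "p dvd Poly_Mapping.lookup f0 x"
    proof (cases "\<exists>k<l. x = Poly_Mapping.single k 1")
      case True
      then obtain k where k: "k < l" "x = Poly_Mapping.single k 1" by blast
      have "Poly_Mapping.lookup f0 x = \<alpha> i k - \<beta> * \<alpha> j k"
        unfolding lf0 A_def B_def k(2) using lookup_lin_form[OF k(1)] by simp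
      then show ?thesis using \<beta>(2) k(1) by (simp add: mod_eq_dvd_iff)
    next
      case False
      then have nk: "\<forall>k<l. x \<noteq> Poly_Mapping.single k 1" by blast
      have "Poly_Mapping.lookup A x = 0" "Poly_Mapping.lookup B x = 0"
        unfolding A_def B_def using lookup_lin_form_other[OF nk] by auto
      then show ?thesis unfolding lf0 by simp
    qed
  qed
  obtain h where h: "h \<in> I" "\<forall>x. Poly_Mapping.lookup f0 x = p * Poly_Mapping.lookup h x"
    using p_divides[OF p nd] f0I f0p by blast
  obtain F c where F: "h = (\<Sum>s\<in>F. c s * s)" "finite F" "F \<subseteq> {A, B}" "\<forall>s\<in>F. c s \<in> zring l"
    using h(1) by (rule poly_idealE)
  define X where "X = (if A \<in> F then Poly_Mapping.lookup (c A) 0 else 0)"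
  define Y where "Y = (if B \<in> F then Poly_Mapping.lookup (c B) 0 else 0)"
  have eqk: "\<alpha> i k - \<beta> * \<alpha> j k = p * (X * \<alpha> i k + Y * \<alpha> j k)" if k: "k < l" for k
  proof -
    have "\<alpha> i k - \<beta> * \<alpha> j k = Poly_Mapping.lookup f0 (Poly_Mapping.single k 1)"
      unfolding lf0 A_def B_def using lookup_lin_form[OF k] by simp
    also have "\<dots> = p * Poly_Mapping.lookup h (Poly_Mapping.single k 1)" using h(2) by simp
    also have "Poly_Mapping.lookup h (Poly_Mapping.single k 1) =
        (\<Sum>s\<in>F. Poly_Mapping.lookup (c s * s) (Poly_Mapping.single k 1))"
      unfolding F(1) lookup_sum ..
    also have "\<dots> = (if A \<in> F then Poly_Mapping.lookup (c A * A) (Poly_Mapping.single k 1) else 0)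
        + (if B \<in> F then Poly_Mapping.lookup (c B * B) (Poly_Mapping.single k 1) else 0)"
      by (rule sum_two_subset[OF F(3) AB])
    also have "\<dots> = X * \<alpha> i k + Y * \<alpha> j k"
      unfolding X_def Y_def A_def B_def using lookup_mult_lin_form[OF k] by simp
    finally show ?thesis .
  qed
  define u where "u = 1 - p * X"
  define v where "v = \<beta> + p * Y"
  have uv: "\<forall>k<l. u * \<alpha> i k = v * \<alpha> j k"
    using eqk unfolding u_def v_def by (simp add: algebra_simps)
  have u0: "u \<noteq> 0"
  proof
    assume "u = 0"
    then have "p * X = 1" unfolding u_def by simp
    then have p1: "p dvd 1" using dvd_triv_left[of p X] by simp
    show False using not_prime_unit[OF p1] p by blast
  qed
  have v0: "v \<noteq> 0"
  proof
    assume "v = 0"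
    obtain k where k: "k < l" "\<alpha> i k \<noteq> 0" using nonzero[OF iin] by blast
    have "u * \<alpha> i k = 0" using uv k(1) \<open>v = 0\<close> by simp
    then show False using u0 k(2) by simp
  qed
  have "hyperplane l (\<alpha> i) = hyperplane l (\<alpha> j)" by (rule hyperplane_scale[OF u0 v0 uv])
  then show False using hne by simp
qed



end
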